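(* Let $q\in H^{-1}_{per}(\mathbb{R},\mathbb{R})$ with $\widehat{q}(0)=0$. The point spectrum of the quasi-differential operator $S_{max}(q)$ on $L_2(\mathbb{R})$ is empty.
   Context: $H^{-1}_{per}(\mathbb{R},\mathbb{R})$: real-valued $1$-periodic distributions $q=\sum_{k\in 2\mathbb{Z}}\widehat{q}(k)e^{ik\pi x}$ with $\sum_{k}(1+|k|)^{-2}|\widehat{q}(k)|^2<\infty$, $\widehat{q}(k)=\overline{\widehat{q}(-k)}$. With $\widehat{q}(0)=0$, $Q(x)=\sum_{k\ne0}\frac{\widehat{q}(k)}{ik\pi}e^{ik\pi x}$ (real, $1$-periodic, $Q'=q$). $l_Q[u]:=-(u'-Qu)'-Q(u'-Qu)-Q^2u$; $S_{max}(q)u=l_Q[u]$ on $\{u\in L_2(\mathbb{R}): u,\,u'-Qu\in W^1_{1,loc}(\mathbb{R}),\,l_Q[u]\in L_2(\mathbb{R})\}$. *)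

theory Defs
  imports "HOL-Analysis.Analysis"
begin

text \<open>The data q in H^{-1}_per(R,R) with mean zero, given by its Fourier coefficients
  qhat k (k in 2Z, i.e. qhat vanishes at odd k), together with the associated real
  1-periodic primitive Q (an L2(0,1) function, determined a.e. by its Fourier coefficients
  qhat k / (i k pi) for k nonzero and mean zero).\<close>

definition Hm1_per_mean_zero :: "(int \<Rightarrow> complex) \<Rightarrow> bool" where
  "Hm1_per_mean_zero qhat \<longleftrightarrow>
     (\<forall>k. odd k \<longrightarrow> qhat k = 0) \<and>
     (\<forall>k. qhat k = cnj (qhat (- k))) \<and>
     (\<lambda>k. (cmod (qhat k))\<^sup>2 / (1 + \<bar>real_of_int k\<bar>)\<^sup>2) summable_on UNIV \<and>
     qhat 0 = 0"

definition is_primitive_Q :: "(int \<Rightarrow> complex) \<Rightarrow> (real \<Rightarrow> real) \<Rightarrow> bool" where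
  "is_primitive_Q qhat Q \<longleftrightarrow>
     Q \<in> borel_measurable lborel \<and>
     (\<forall>x. Q (x + 1) = Q x) \<and>
     set_integrable lborel {0..1} (\<lambda>x. (Q x)\<^sup>2) \<and>
     (LBINT x=0..1. Q x) = 0 \<and>
     (\<forall>k. even k \<and> k \<noteq> 0 \<longrightarrow>
        (LBINT x=0..1. complex_of_real (Q x) * exp (- \<i> * of_int k * of_real pi * of_real x))
          = qhat k / (\<i> * of_int k * of_real pi))"

definition W11loc_deriv :: "(real \<Rightarrow> complex) \<Rightarrow> (real \<Rightarrow> complex) \<Rightarrow> bool" where
  "W11loc_deriv f f' \<longleftrightarrow>
     (\<forall>a b. set_integrable lborel {a..b} f') \<and>
     (\<forall>a b. a \<le> b \<longrightarrow> f b - f a = (LBINT x=a..b. f' x))"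

definition L2_fun :: "(real \<Rightarrow> complex) \<Rightarrow> bool" where
  "L2_fun f \<longleftrightarrow> f \<in> borel_measurable lborel \<and> integrable lborel (\<lambda>x. (cmod (f x))\<^sup>2)"

text \<open>Graph of S_max(q): u in the domain and S_max(q) u = f (equality in L2, i.e. a.e.).
  Here d = u', u1 = u' - Q u (the quasi-derivative, an absolutely continuous representative),
  d1 = (u' - Q u)'.\<close>
definition Smax_graph :: "(real \<Rightarrow> real) \<Rightarrow> (real \<Rightarrow> complex) \<Rightarrow> (real \<Rightarrow> complex) \<Rightarrow> bool" where
  "Smax_graph Q u f \<longleftrightarrow>
     L2_fun u \<and>
     (\<exists>d u1 d1.
        W11loc_deriv u d \<and> W11loc_deriv u1 d1 \<and>
        (AE x in lborel. u1 x = d x - of_real (Q x) * u x) \<and>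
        L2_fun (\<lambda>x. - d1 x - of_real (Q x) * u1 x - of_real ((Q x)\<^sup>2) * u x) \<and>
        (AE x in lborel. f x = - d1 x - of_real (Q x) * u1 x - of_real ((Q x)\<^sup>2) * u x))"

definition point_spectrum_Smax :: "(real \<Rightarrow> real) \<Rightarrow> complex set" where
  "point_spectrum_Smax Q =
     {z. \<exists>u. Smax_graph Q u (\<lambda>x. z * u x) \<and> \<not> (AE x in lborel. u x = 0)}"

end

theory Submission
  imports Defs
begin

lemma hi_shift: "((\<lambda>x. f (x + c)) has_integral I) {a - c..b - c} \<longleftrightarrow> (f has_integral I) {a..b}"
  for f :: "real \<Rightarrow> 'b::euclidean_space"
  using has_integral_affinity_iff[of 1 f c I a b] by simp

lemma hi_shift': "(f has_integral I) {a..b} \<Longrightarrow> ((\<lambda>x. f (x + c)) has_integral I) {a - c..b - c}"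
  for f :: "real \<Rightarrow> 'b::euclidean_space"
  using hi_shift by blast

lemma integral_shift_cont:
  fixes f :: "real \<Rightarrow> 'b::euclidean_space"
  assumes "continuous_on UNIV f"
  shows "integral {a..b} (\<lambda>x. f (x + c)) = integral {a+c..b+c} f"
proof -
  have "(f has_integral integral {a+c..b+c} f) {a+c..b+c}"
    by (rule integrable_integral, rule integrable_continuous_interval, rule continuous_on_subset[OF assms]) auto
  from hi_shift'[OF this, of c] show ?thesis by (simp add: integral_unique)
qed

lemma cont_from_integral:
  fixes f f' :: "real \<Rightarrow> 'b::euclidean_space"
  assumes "\<And>a b. a \<le> b \<Longrightarrow> (f' has_integral (f b - f a)) {a..b}"
  shows "continuous_on UNIV f"
proof -
  have "isCont f x" for x
  proof -
    have int: "f' integrable_on {x-1..x+1}" using assms[of "x-1" "x+1"] by auto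
    have "continuous_on {x-1..x+1} (\<lambda>y. f (x-1) + integral {x-1..y} f')"
      by (intro continuous_intros indefinite_integral_continuous_1 int)
    moreover have "f (x-1) + integral {x-1..y} f' = f y" if "y \<in> {x-1..x+1}" for y
      using assms[of "x-1" y] that by (simp add: integral_unique)
    ultimately have "continuous_on {x-1..x+1} f"
      using continuous_on_cong by (smt (verit))
    then show ?thesis
      by (rule continuous_on_interior) auto
  qed
  then show ?thesis by (simp add: continuous_at_imp_continuous_on)
qed

definition BL :: "(real \<Rightarrow> complex) \<Rightarrow> bool" where
  "BL g \<longleftrightarrow> continuous_on UNIV g \<and> (\<exists>B. \<forall>a b. integral {a..b} (\<lambda>x. (cmod (g x))\<^sup>2) \<le> B)"

lemma geo_pow:
  fixes g :: "real \<Rightarrow> complex"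
  assumes "\<forall>x. g (x + 1) = l * g x"
  shows "g (x + real n) = l ^ n * g x"
proof (induction n)
  case (Suc n)
  have "g (x + real (Suc n)) = g ((x + real n) + 1)" by (simp add: algebra_simps)
  also have "\<dots> = l * g (x + real n)" using assms by blast
  finally show ?case using Suc by (simp add: mult.assoc)
qed simp

lemma geo_core:
  fixes g :: "real \<Rightarrow> complex"
  assumes BL: "BL g" and rec: "\<forall>x. g (x + 1) = l * g x" and l1: "cmod l \<ge> 1"
  shows "g x = 0"
proof -
  obtain B where B: "\<And>a b. integral {a..b} (\<lambda>x. (cmod (g x))\<^sup>2) \<le> B" and cg: "continuous_on UNIV g"
    using BL unfolding BL_def by blast
  define f where "f x = (cmod (g x))\<^sup>2" for x
  have cf: "continuous_on UNIV f" unfolding f_def by (intro continuous_intros cg)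
  have fint: "f integrable_on {a..b}" for a b
    by (rule integrable_continuous_interval, rule continuous_on_subset[OF cf]) auto
  have fnn: "f x \<ge> 0" for x unfolding f_def by simp
  define I where "I a = integral {a..a+1} f" for a
  have Inn: "I a \<ge> 0" for a unfolding I_def by (rule integral_nonneg[OF fint]) (simp add: fnn)
  have Istep: "I (a + 1) = (cmod l)\<^sup>2 * I a" for a
  proof -
    have "I (a+1) = integral {a..a+1} (\<lambda>x. f (x + 1))"
      unfolding I_def using integral_shift_cont[OF cf, of a "a+1" 1] by (simp add: algebra_simps)
    also have "\<dots> = integral {a..a+1} (\<lambda>x. (cmod l)\<^sup>2 * f x)"
      using rec by (simp add: f_def norm_mult power_mult_distrib)
    also have "\<dots> = (cmod l)\<^sup>2 * I a" unfolding I_def by simp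
    finally show ?thesis .
  qed
  have Imono: "I (real n) \<ge> I 0" for n
  proof (induction n)
    case (Suc n)
    have "I (real (Suc n)) = (cmod l)\<^sup>2 * I (real n)" using Istep[of "real n"] by (simp add: algebra_simps)
    moreover have "(cmod l)\<^sup>2 * I (real n) \<ge> 1 * I (real n)"
      by (rule mult_right_mono) (use l1 Inn in \<open>auto simp: one_le_power\<close>)
    ultimately show ?case using Suc by simp
  qed simp
  have sumI: "integral {0..real n} f \<ge> real n * I 0" for n
  proof (induction n)
    case (Suc n)
    have "integral {0..real n} f + integral {real n..real (Suc n)} f = integral {0..real (Suc n)} f"
      by (rule Henstock_Kurzweil_Integration.integral_combine) (auto intro: fint)
    moreover have "integral {real n..real (Suc n)} f = I (real n)" unfolding I_def by (simp add: add.commute)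
    ultimately show ?case using Suc Imono[of n] by (simp add: algebra_simps)
  qed simp
  have I0: "I 0 = 0"
  proof (rule ccontr)
    assume "I 0 \<noteq> 0"
    then have pos: "I 0 > 0" using Inn[of 0] by simp
    obtain n :: nat where n: "B / I 0 < real n" using reals_Archimedean2 by blast
    then have "B < real n * I 0" using pos by (simp add: field_simps)
    moreover have "real n * I 0 \<le> B" using sumI[of n] B[of 0 "real n"] unfolding f_def by simp
    ultimately show False by simp
  qed
  have g01: "g y = 0" if "y \<in> {0..1}" for y
  proof -
    have "(f has_integral 0) (cbox 0 1)"
      using I0 fint[of 0 1] unfolding I_def by (simp add: has_integral_integral)
    then have "f y = 0"
      by (rule has_integral_0_cbox_imp_0[rotated 2]) (use that in \<open>auto intro: continuous_on_subset[OF cf] simp: fnn\<close>)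
    then show ?thesis unfolding f_def by simp
  qed
  have l0: "l \<noteq> 0" using l1 by auto
  show ?thesis
  proof (cases "x \<ge> 0")
    case True
    define n where "n = nat \<lfloor>x\<rfloor>"
    define y where "y = x - real n"
    have e: "real n = of_int \<lfloor>x\<rfloor>" unfolding n_def using True by simp
    have y: "y \<in> {0..1}" unfolding y_def e atLeastAtMost_iff using of_int_floor_le[of x] real_of_int_floor_add_one_gt[of x] by linarith
    have "g (y + real n) = l ^ n * g y" by (rule geo_pow[OF rec])
    then show ?thesis using g01[OF y] by (simp add: y_def)
  next
    case False
    define n where "n = nat (- \<lfloor>x\<rfloor>)"
    define y where "y = x + real n"
    have e: "real n = - of_int \<lfloor>x\<rfloor>" unfolding n_def using False by simp
    have y: "y \<in> {0..1}" unfolding y_def e atLeastAtMost_iff using of_int_floor_le[of x] real_of_int_floor_add_one_gt[of x] by linarith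
    have "g (x + real n) = l ^ n * g x" by (rule geo_pow[OF rec])
    then show ?thesis using g01[OF y] l0 by (simp add: y_def)
  qed
qed

lemma geo_zero:
  fixes g :: "real \<Rightarrow> complex"
  assumes BL: "BL g" and rec: "\<forall>x. g (x + 1) = l * g x"
  shows "g x = 0"
proof (cases "cmod l \<ge> 1")
  case True
  then show ?thesis using geo_core[OF BL rec] by blast
next
  case False
  show ?thesis
  proof (cases "l = 0")
    case True
    then show ?thesis using rec[rule_format, of "x - 1"] by simp
  next
    case l0: False
    define h where "h y = g (- y)" for y
    obtain B where B: "\<And>a b. integral {a..b} (\<lambda>x. (cmod (g x))\<^sup>2) \<le> B" and cg: "continuous_on UNIV g"
      using BL unfolding BL_def by blast
    have ch: "continuous_on UNIV h" unfolding h_def by (intro continuous_intros continuous_on_compose2[OF cg]) auto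
    have "integral {a..b} (\<lambda>x. (cmod (h x))\<^sup>2) \<le> B" for a b
      using Henstock_Kurzweil_Integration.integral_reflect_real[of "-a" "-b" "\<lambda>x. (cmod (g x))\<^sup>2"] B[of "-b" "-a"] unfolding h_def by simp
    then have BLh: "BL h" unfolding BL_def using ch by blast
    have rech: "\<forall>y. h (y + 1) = inverse l * h y"
    proof
      fix y
      have eq: "g (- y) = l * g (- y - 1)" using rec[rule_format, of "-y-1"] by simp
      have "inverse l * g (-y) = (inverse l * l) * g (- y - 1)" unfolding eq by (simp only: mult.assoc)
      then have "g (- y - 1) = inverse l * g (-y)" using l0 by simp
      moreover have "h (y+1) = g (-y-1)" unfolding h_def by (rule arg_cong[where f=g]) simp
      ultimately show "h (y + 1) = inverse l * h y" unfolding h_def by (simp only:)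
    qed
    have p: "0 < cmod l" "cmod l \<le> 1" using l0 False by auto
    have "cmod (inverse l) \<ge> 1" unfolding norm_inverse by (rule one_le_inverse[OF p])
    then have "h (- x) = 0" using geo_core[OF BLh rech] by blast
    then show ?thesis unfolding h_def by simp
  qed
qed

lemma BL_shift:
  assumes "BL g" shows "BL (\<lambda>x. g (x + c))"
proof -
  obtain B where B: "\<And>a b. integral {a..b} (\<lambda>x. (cmod (g x))\<^sup>2) \<le> B" and cg: "continuous_on UNIV g"
    using assms unfolding BL_def by blast
  have cs: "continuous_on UNIV (\<lambda>x. g (x + c))" by (intro continuous_on_compose2[OF cg] continuous_intros) auto
  have cf: "continuous_on UNIV (\<lambda>x. (cmod (g x))\<^sup>2)" by (intro continuous_intros cg)
  have "integral {a..b} (\<lambda>x. (cmod (g (x + c)))\<^sup>2) \<le> B" for a b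
    using integral_shift_cont[OF cf, of a b c] B[of "a+c" "b+c"] by simp
  then show ?thesis unfolding BL_def using cs by blast
qed

lemma BL_comb:
  assumes "BL g" "BL h" shows "BL (\<lambda>x. g x - m * h x)"
proof -
  obtain B1 where B1: "\<And>a b. integral {a..b} (\<lambda>x. (cmod (g x))\<^sup>2) \<le> B1" and cg: "continuous_on UNIV g"
    using assms unfolding BL_def by blast
  obtain B2 where B2: "\<And>a b. integral {a..b} (\<lambda>x. (cmod (h x))\<^sup>2) \<le> B2" and ch: "continuous_on UNIV h"
    using assms unfolding BL_def by blast
  have cs: "continuous_on UNIV (\<lambda>x. g x - m * h x)" by (intro continuous_intros cg ch)
  have "integral {a..b} (\<lambda>x. (cmod (g x - m * h x))\<^sup>2) \<le> 2 * B1 + 2 * (cmod m)\<^sup>2 * B2" for a b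
  proof -
    have i1: "(\<lambda>x. (cmod (g x))\<^sup>2) integrable_on {a..b}"
      by (rule integrable_continuous_interval, rule continuous_on_subset[of UNIV]) (auto intro!: continuous_intros cg)
    have i2: "(\<lambda>x. (cmod (h x))\<^sup>2) integrable_on {a..b}"
      by (rule integrable_continuous_interval, rule continuous_on_subset[of UNIV]) (auto intro!: continuous_intros ch)
    have i3: "(\<lambda>x. (cmod (g x - m * h x))\<^sup>2) integrable_on {a..b}"
      by (rule integrable_continuous_interval, rule continuous_on_subset[of UNIV]) (auto intro!: continuous_intros cg ch)
    have pw: "(cmod (g x - m * h x))\<^sup>2 \<le> 2 * (cmod (g x))\<^sup>2 + 2 * (cmod m)\<^sup>2 * (cmod (h x))\<^sup>2" for x
    proof -
      have "cmod (g x - m * h x) \<le> cmod (g x) + cmod m * cmod (h x)"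
        using norm_triangle_ineq4[of "g x" "m * h x"] by (simp add: norm_mult)
      then have "(cmod (g x - m * h x))\<^sup>2 \<le> (cmod (g x) + cmod m * cmod (h x))\<^sup>2"
        by (simp add: power_mono)
      also have "\<dots> \<le> 2 * (cmod (g x))\<^sup>2 + 2 * (cmod m)\<^sup>2 * (cmod (h x))\<^sup>2"
      proof -
        have sq: "(p + q)\<^sup>2 \<le> 2 * p\<^sup>2 + 2 * q\<^sup>2" for p q :: real
        proof -
          have "2 * p\<^sup>2 + 2 * q\<^sup>2 - (p + q)\<^sup>2 = (p - q)\<^sup>2" by (simp add: power2_eq_square algebra_simps)
          then show ?thesis using zero_le_power2[of "p - q"] by linarith
        qed
        show ?thesis using sq[of "cmod (g x)" "cmod m * cmod (h x)"] by (simp add: power_mult_distrib)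
      qed
      finally show ?thesis .
    qed
    have i4: "(\<lambda>x. 2 * (cmod m)\<^sup>2 * (cmod (h x))\<^sup>2) integrable_on {a..b}"
      using integrable_on_cmult_left[OF i2, of "2 * (cmod m)\<^sup>2"] by simp
    have i5: "(\<lambda>x. 2 * (cmod (g x))\<^sup>2) integrable_on {a..b}"
      using integrable_on_cmult_left[OF i1, of "2"] by simp
    have "integral {a..b} (\<lambda>x. (cmod (g x - m * h x))\<^sup>2) \<le> integral {a..b} (\<lambda>x. 2 * (cmod (g x))\<^sup>2 + 2 * (cmod m)\<^sup>2 * (cmod (h x))\<^sup>2)"
      by (rule integral_le[OF i3]) (auto intro!: integrable_add i4 i5 pw)
    also have "\<dots> = integral {a..b} (\<lambda>x. 2 * (cmod (g x))\<^sup>2) + integral {a..b} (\<lambda>x. 2 * (cmod m)\<^sup>2 * (cmod (h x))\<^sup>2)"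
      by (rule integral_add[OF i5 i4])
    also have "\<dots> = 2 * integral {a..b} (\<lambda>x. (cmod (g x))\<^sup>2) + 2 * (cmod m)\<^sup>2 * integral {a..b} (\<lambda>x. (cmod (h x))\<^sup>2)"
      unfolding integral_mult[OF i1, of 2, symmetric] integral_mult[OF i2, of "2 * (cmod m)\<^sup>2", symmetric] by (rule refl)
    also have "\<dots> \<le> 2 * B1 + 2 * (cmod m)\<^sup>2 * B2"
      using B1[of a b] B2[of a b] by (intro add_mono mult_left_mono) auto
    finally show ?thesis .
  qed
  then show ?thesis unfolding BL_def using cs by blast
qed

definition Sol :: "(real \<Rightarrow> real) \<Rightarrow> complex \<Rightarrow> (real \<Rightarrow> complex) \<Rightarrow> (real \<Rightarrow> complex) \<Rightarrow> bool" where
  "Sol Q z U U1 \<longleftrightarrow> continuous_on UNIV U \<and> continuous_on UNIV U1 \<and>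
    (\<forall>a b. a \<le> b \<longrightarrow>
      ((\<lambda>x. U1 x + complex_of_real (Q x) * U x) has_integral (U b - U a)) {a..b} \<and>
      ((\<lambda>x. - (complex_of_real (Q x) * U1 x) - (complex_of_real ((Q x)\<^sup>2) + z) * U x) has_integral (U1 b - U1 a)) {a..b})"

lemma Sol_lin:
  assumes "Sol Q z U U1" "Sol Q z V V1"
  shows "Sol Q z (\<lambda>x. p * U x + r * V x) (\<lambda>x. p * U1 x + r * V1 x)"
proof -
  have c: "continuous_on UNIV (\<lambda>x. p * U x + r * V x)" "continuous_on UNIV (\<lambda>x. p * U1 x + r * V1 x)"
    using assms unfolding Sol_def by (auto intro!: continuous_intros)
  have "((\<lambda>x. (p * U1 x + r * V1 x) + complex_of_real (Q x) * (p * U x + r * V x)) has_integral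
          ((p * U b + r * V b) - (p * U a + r * V a))) {a..b} \<and>
        ((\<lambda>x. - (complex_of_real (Q x) * (p * U1 x + r * V1 x)) - (complex_of_real ((Q x)\<^sup>2) + z) * (p * U x + r * V x))
          has_integral ((p * U1 b + r * V1 b) - (p * U1 a + r * V1 a))) {a..b}" if ab: "a \<le> b" for a b
  proof -
    from assms ab have h1: "((\<lambda>x. U1 x + complex_of_real (Q x) * U x) has_integral (U b - U a)) {a..b}"
      and h2: "((\<lambda>x. - (complex_of_real (Q x) * U1 x) - (complex_of_real ((Q x)\<^sup>2) + z) * U x) has_integral (U1 b - U1 a)) {a..b}"
      and h3: "((\<lambda>x. V1 x + complex_of_real (Q x) * V x) has_integral (V b - V a)) {a..b}"
      and h4: "((\<lambda>x. - (complex_of_real (Q x) * V1 x) - (complex_of_real ((Q x)\<^sup>2) + z) * V x) has_integral (V1 b - V1 a)) {a..b}"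
      unfolding Sol_def by blast+
    have A: "((\<lambda>x. p * (U1 x + complex_of_real (Q x) * U x) + r * (V1 x + complex_of_real (Q x) * V x)) has_integral
            (p * (U b - U a) + r * (V b - V a))) {a..b}"
      by (intro has_integral_add has_integral_mult_right h1 h3)
    have B: "((\<lambda>x. p * (- (complex_of_real (Q x) * U1 x) - (complex_of_real ((Q x)\<^sup>2) + z) * U x) + r * (- (complex_of_real (Q x) * V1 x) - (complex_of_real ((Q x)\<^sup>2) + z) * V x)) has_integral
            (p * (U1 b - U1 a) + r * (V1 b - V1 a))) {a..b}"
      by (intro has_integral_add has_integral_mult_right h2 h4)
    have e1: "(\<lambda>x. p * (U1 x + complex_of_real (Q x) * U x) + r * (V1 x + complex_of_real (Q x) * V x)) =
              (\<lambda>x. (p * U1 x + r * V1 x) + complex_of_real (Q x) * (p * U x + r * V x))"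
      by (rule ext) (simp add: algebra_simps)
    have e2: "(\<lambda>x. p * (- (complex_of_real (Q x) * U1 x) - (complex_of_real ((Q x)\<^sup>2) + z) * U x) + r * (- (complex_of_real (Q x) * V1 x) - (complex_of_real ((Q x)\<^sup>2) + z) * V x)) =
              (\<lambda>x. - (complex_of_real (Q x) * (p * U1 x + r * V1 x)) - (complex_of_real ((Q x)\<^sup>2) + z) * (p * U x + r * V x))"
      by (rule ext) (simp add: algebra_simps)
    have e3: "p * (U b - U a) + r * (V b - V a) = (p * U b + r * V b) - (p * U a + r * V a)" by (simp add: algebra_simps)
    have e4: "p * (U1 b - U1 a) + r * (V1 b - V1 a) = (p * U1 b + r * V1 b) - (p * U1 a + r * V1 a)" by (simp add: algebra_simps)
    show ?thesis using A B unfolding e1 e2 e3 e4 by blast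
  qed
  then show ?thesis unfolding Sol_def using c by blast
qed

lemma Sol_shift:
  assumes S: "Sol Q z U U1" and per: "\<forall>x. Q (x + 1) = Q x"
  shows "Sol Q z (\<lambda>x. U (x + 1)) (\<lambda>x. U1 (x + 1))"
proof -
  have cU: "continuous_on UNIV U" and cU1: "continuous_on UNIV U1" using S unfolding Sol_def by auto
  have c: "continuous_on UNIV (\<lambda>x. U (x + 1))" "continuous_on UNIV (\<lambda>x. U1 (x + 1))"
    by (intro continuous_on_compose2[OF cU] continuous_on_compose2[OF cU1] continuous_intros; simp)+
  have "((\<lambda>x. U1 (x + 1) + complex_of_real (Q x) * U (x + 1)) has_integral (U (b + 1) - U (a + 1))) {a..b} \<and>
        ((\<lambda>x. - (complex_of_real (Q x) * U1 (x + 1)) - (complex_of_real ((Q x)\<^sup>2) + z) * U (x + 1)) has_integral (U1 (b + 1) - U1 (a + 1))) {a..b}"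
    if ab: "a \<le> b" for a b
  proof -
    from S ab have h1: "((\<lambda>x. U1 x + complex_of_real (Q x) * U x) has_integral (U (b+1) - U (a+1))) {a+1..b+1}"
      and h2: "((\<lambda>x. - (complex_of_real (Q x) * U1 x) - (complex_of_real ((Q x)\<^sup>2) + z) * U x) has_integral (U1 (b+1) - U1 (a+1))) {a+1..b+1}"
      unfolding Sol_def by auto
    have Qs: "Q (x + 1) = Q x" for x using per by blast
    show ?thesis using hi_shift'[OF h1, of 1] hi_shift'[OF h2, of 1] by (simp add: Qs)
  qed
  then show ?thesis unfolding Sol_def using c by blast
qed

lemma abs_le_sq: "\<bar>q::real\<bar> \<le> 1 + q\<^sup>2"
proof -
  have "0 \<le> (\<bar>q\<bar> - 1)\<^sup>2" by simp
  then have "2 * \<bar>q\<bar> \<le> 1 + q\<^sup>2" by (simp add: power2_eq_square algebra_simps)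
  then show ?thesis using zero_le_power2[of q] by linarith
qed

lemma bnd1:
  assumes "cmod a \<le> M" "cmod b \<le> M"
  shows "cmod (b + complex_of_real q * a) \<le> ((2 + cmod z) + 2 * q\<^sup>2) * M"
proof -
  have M0: "M \<ge> 0" using assms(1) norm_ge_zero order_trans by blast
  have "cmod (b + complex_of_real q * a) \<le> cmod b + \<bar>q\<bar> * cmod a"
    using norm_triangle_ineq[of b "complex_of_real q * a"] by (simp add: norm_mult)
  also have "\<dots> \<le> M + (1 + q\<^sup>2) * M"
    using assms abs_le_sq[of q] M0 by (intro add_mono mult_mono) auto
  also have "\<dots> \<le> ((2 + cmod z) + 2 * q\<^sup>2) * M"
    using M0 by (simp add: algebra_simps mult_right_mono)
  finally show ?thesis .
qed

lemma bnd2: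
  assumes "cmod a \<le> M" "cmod b \<le> M"
  shows "cmod (- (complex_of_real q * b) - (complex_of_real (q\<^sup>2) + z) * a) \<le> ((2 + cmod z) + 2 * q\<^sup>2) * M"
proof -
  have M0: "M \<ge> 0" using assms(1) norm_ge_zero order_trans by blast
  have "cmod (- (complex_of_real q * b) - (complex_of_real (q\<^sup>2) + z) * a) \<le> cmod (complex_of_real q * b) + cmod ((complex_of_real (q\<^sup>2) + z) * a)"
    by (rule order_trans[OF norm_triangle_ineq4]) simp
  also have "\<dots> \<le> \<bar>q\<bar> * M + (q\<^sup>2 + cmod z) * M"
  proof (intro add_mono)
    show "cmod (complex_of_real q * b) \<le> \<bar>q\<bar> * M" using assms by (simp add: norm_mult mult_left_mono)
    have "cmod (complex_of_real (q\<^sup>2) + z) \<le> q\<^sup>2 + cmod z"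
      using norm_triangle_ineq[of "complex_of_real (q\<^sup>2)" z] by (simp add: norm_power)
    then show "cmod ((complex_of_real (q\<^sup>2) + z) * a) \<le> (q\<^sup>2 + cmod z) * M"
      unfolding norm_mult using assms M0 by (intro mult_mono) auto
  qed
  also have "\<dots> \<le> (1 + q\<^sup>2) * M + (q\<^sup>2 + cmod z) * M"
    using abs_le_sq[of q] M0 by (intro add_mono mult_right_mono) auto
  also have "\<dots> \<le> ((2 + cmod z) + 2 * q\<^sup>2) * M"
    using M0 by (simp add: algebra_simps mult_right_mono)
  finally show ?thesis .
qed

lemma Sol_unique:
  assumes S: "Sol Q z U U1" and Qint: "\<And>a b. (\<lambda>x. (Q x)\<^sup>2) integrable_on {a..b}"
    and t0: "U t0 = 0" "U1 t0 = 0"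
  shows "U x = 0 \<and> U1 x = 0"
proof -
  have cU: "continuous_on UNIV U" and cU1: "continuous_on UNIV U1" using S unfolding Sol_def by auto
  define G where "G x = (2 + cmod z) + 2 * (Q x)\<^sup>2" for x
  have Gint: "G integrable_on {a..b}" for a b
    unfolding G_def by (intro integrable_add integrable_const_ivl)
      (use integrable_on_cmult_left[OF Qint, of 2 a b] in simp)
  have Gnn: "G x \<ge> 0" for x unfolding G_def by simp
  define Z where "Z = {x. U x = 0 \<and> U1 x = 0}"
  have "closed Z" unfolding Z_def
    by (intro closed_Collect_conj closed_Collect_eq cU cU1 continuous_on_const)
  moreover have "open Z"
    unfolding open_contains_ball
  proof
    fix t assume "t \<in> Z"
    then have Ut: "U t = 0" "U1 t = 0" unfolding Z_def by auto
    define F where "F y = integral {t-1..y} G" for y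
    have "continuous_on {t-1..t+1} F" unfolding F_def by (rule indefinite_integral_continuous_1[OF Gint])
    then have "isCont F t" by (rule continuous_on_interior) auto
    then obtain d where d: "d > 0" "\<And>y. dist y t < d \<Longrightarrow> dist (F y) (F t) < 1/4"
      unfolding continuous_at_eps_delta by (meson zero_less_divide_1_iff zero_less_numeral)
    define h where "h = min (d/2) (1/2)"
    have h: "0 < h" "h < d" "h \<le> 1/2" unfolding h_def using d by auto
    have Fcomb: "F (t - h) + integral {t-h..t+h} G = F (t + h)"
      unfolding F_def by (rule Henstock_Kurzweil_Integration.integral_combine) (use h in \<open>auto intro: Gint\<close>)
    have "dist (F (t+h)) (F t) < 1/4" "dist (F (t-h)) (F t) < 1/4"
      using d(2)[of "t+h"] d(2)[of "t-h"] h by (auto simp: dist_real_def)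
    then have hG: "integral {t-h..t+h} G \<le> 1/2" using Fcomb unfolding dist_real_def abs_less_iff by linarith
    define K where "K = {t-h..t+h}"
    define m where "m y = max (cmod (U y)) (cmod (U1 y))" for y
    have cm: "continuous_on K m" unfolding m_def
      by (intro continuous_intros continuous_on_subset[OF cU] continuous_on_subset[OF cU1]) auto
    obtain x0 where x0: "x0 \<in> K" "\<And>y. y \<in> K \<Longrightarrow> m y \<le> m x0"
      using continuous_attains_sup[OF _ _ cm] h unfolding K_def by fastforce
    define M where "M = m x0"
    have M0: "M \<ge> 0" unfolding M_def m_def by (simp add: le_max_iff_disj)
    have bU: "cmod (U y) \<le> M" "cmod (U1 y) \<le> M" if "y \<in> K" for y
      using x0(2)[OF that] unfolding M_def m_def by auto
    have GMint: "(\<lambda>y. G y * M) integrable_on {a..b}" for a b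
      using integrable_on_cmult_right[OF Gint, of M a b] by simp
    have key: "cmod (U hi - U lo) \<le> M/2 \<and> cmod (U1 hi - U1 lo) \<le> M/2" if lh: "lo \<in> K" "hi \<in> K" "lo \<le> hi" for lo hi
    proof -
      have sub: "{lo..hi} \<subseteq> K" using lh unfolding K_def by auto
      from S lh(3) have h1: "((\<lambda>x. U1 x + complex_of_real (Q x) * U x) has_integral (U hi - U lo)) {lo..hi}"
        and h2: "((\<lambda>x. - (complex_of_real (Q x) * U1 x) - (complex_of_real ((Q x)\<^sup>2) + z) * U x) has_integral (U1 hi - U1 lo)) {lo..hi}"
        unfolding Sol_def by blast+
      have IK: "integral {lo..hi} (\<lambda>y. G y * M) \<le> integral K (\<lambda>y. G y * M)"
        by (rule integral_subset_le[OF sub GMint]) (use Gnn M0 GMint in \<open>auto simp: K_def\<close>)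
      have IK2: "integral K (\<lambda>y. G y * M) \<le> M / 2"
      proof -
        have "integral K (\<lambda>y. G y * M) = integral K G * M"
          using integral_mult[OF Gint, of M "t-h" "t+h"] unfolding K_def by (simp add: mult.commute)
        also have "\<dots> \<le> 1/2 * M" using hG M0 unfolding K_def by (intro mult_right_mono) auto
        finally show ?thesis by simp
      qed
      have "cmod (U hi - U lo) \<le> integral {lo..hi} (\<lambda>y. G y * M)"
        unfolding integral_unique[OF h1, symmetric]
        by (rule integral_norm_bound_integral[OF has_integral_integrable[OF h1] GMint])
          (use sub bU in \<open>auto simp: G_def intro!: bnd1\<close>)
      moreover have "cmod (U1 hi - U1 lo) \<le> integral {lo..hi} (\<lambda>y. G y * M)"
        unfolding integral_unique[OF h2, symmetric]
        by (rule integral_norm_bound_integral[OF has_integral_integrable[OF h2] GMint])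
          (unfold G_def, rule bnd2; use sub bU in auto)
      ultimately show ?thesis using IK IK2 by linarith
    qed
    have tK: "t \<in> K" unfolding K_def using h by auto
    have small: "cmod (U y) \<le> M/2 \<and> cmod (U1 y) \<le> M/2" if "y \<in> K" for y
    proof (cases "y \<le> t")
      case True
      then show ?thesis using key[OF that tK] Ut by (simp add: norm_minus_commute)
    next
      case False
      then show ?thesis using key[OF tK that] Ut by simp
    qed
    have "m x0 \<le> M/2" unfolding m_def using small[OF x0(1)] by (simp add: max_def)
    then have "M \<le> M/2" unfolding M_def .
    then have M00: "M = 0" using M0 by simp
    have "ball t h \<subseteq> K" unfolding K_def by (auto simp: dist_real_def)
    moreover have "K \<subseteq> Z" using bU M00 unfolding Z_def by fastforce
    ultimately show "\<exists>e>0. ball t e \<subseteq> Z" using h by blast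
  qed
  moreover have "Z \<noteq> {}" using t0 unfolding Z_def by auto
  ultimately have "Z = UNIV" using clopen by blast
  then show ?thesis unfolding Z_def by auto
qed

lemma W11_hk:
  assumes "W11loc_deriv f f'" "a \<le> b"
  shows "(f' has_integral (f b - f a)) {a..b}"
proof -
  have si: "set_integrable lborel {a..b} f'" and eq: "f b - f a = (LBINT x=a..b. f' x)"
    using assms unfolding W11loc_deriv_def by auto
  have "f b - f a = integral {a..b} f'"
    using eq interval_integral_Icc[OF assms(2), of f'] set_borel_integral_eq_integral(2)[OF si] by simp
  then show ?thesis using set_borel_integral_eq_integral(1)[OF si] integrable_integral by metis
qed

lemma AE_negl:
  assumes "AE x in lborel. P x"
  obtains N where "negligible N" "\<And>x. x \<notin> N \<Longrightarrow> P x"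
proof -
  have "AE x in lebesgue. P x" using AE_completion[OF assms] .
  then obtain N where "negligible N" "{x. \<not> P x} \<subseteq> N"
    unfolding eventually_ae_filter_negligible by blast
  then show ?thesis using that by blast
qed

lemma Q_locint:
  fixes Q :: "real \<Rightarrow> real"
  assumes per: "\<forall>x. Q (x + 1) = Q x" and i01: "(\<lambda>x. (Q x)\<^sup>2) integrable_on {0..1}"
  shows "(\<lambda>x. (Q x)\<^sup>2) integrable_on {a..b}"
proof -
  define f where "f x = (Q x)\<^sup>2" for x
  have fp: "f (x + c) = f x" if "c = 1 \<or> c = -1" for x c
    using that per[rule_format, of "x - 1"] per unfolding f_def by auto
  have step: "f integrable_on {real_of_int k - c..real_of_int k + 1 - c}"
    if hk: "f integrable_on {real_of_int k..real_of_int k + 1}" and hc: "c = 1 \<or> c = -1" for k c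
  proof -
    obtain I where "(f has_integral I) {real_of_int k..real_of_int k + 1}" using hk by blast
    from hi_shift'[OF this, of c] have "((\<lambda>x. f (x + c)) has_integral I) {real_of_int k - c..real_of_int k + 1 - c}" .
    then show ?thesis using fp[OF hc] by auto
  qed
  have unit: "f integrable_on {real_of_int k..real_of_int k + 1}" for k
  proof (induction k rule: int_induct[where k=0])
    case base then show ?case using i01 unfolding f_def by simp
  next
    case (step1 i) then show ?case using step[OF step1(2), of "-1"] by (simp add: algebra_simps)
  next
    case (step2 i) then show ?case using step[OF step2(2), of "1"] by (simp add: algebra_simps)
  qed
  have sym: "f integrable_on {- real n..real n}" for n :: nat
  proof (induction n)
    case 0 then show ?case using integrable_on_subinterval[OF unit[of 0], of 0 0] by simp
  next
    case (Suc n)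
    have a: "f integrable_on {- real (Suc n)..- real n}" using unit[of "- int (Suc n)"] by simp
    have b: "f integrable_on {real n..real (Suc n)}" using unit[of "int n"] by (simp add: add.commute)
    have c: "f integrable_on {- real (Suc n)..real n}"
      by (rule Henstock_Kurzweil_Integration.integrable_combine[OF _ _ a Suc]) auto
    show ?case by (rule Henstock_Kurzweil_Integration.integrable_combine[OF _ _ c b]) auto
  qed
  define n where "n = nat \<lceil>max \<bar>a\<bar> \<bar>b\<bar>\<rceil>"
  have "{a..b} \<subseteq> {- real n..real n}" unfolding n_def by auto linarith+
  then show ?thesis using integrable_on_subinterval[OF sym] unfolding f_def by blast
qed

lemma main_zero:
  fixes Q :: "real \<Rightarrow> real"
  assumes per: "\<forall>x. Q (x + 1) = Q x" and Qint: "\<And>a b. (\<lambda>x. (Q x)\<^sup>2) integrable_on {a..b}"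
    and G: "Smax_graph Q u (\<lambda>x. z * u x)"
  shows "u x = 0"
proof -
  from G obtain d u1 d1 where L2u: "L2_fun u" and Wu: "W11loc_deriv u d" and Wu1: "W11loc_deriv u1 d1"
    and ae1: "AE x in lborel. u1 x = d x - of_real (Q x) * u x"
    and ae2: "AE x in lborel. z * u x = - d1 x - of_real (Q x) * u1 x - of_real ((Q x)\<^sup>2) * u x"
    unfolding Smax_graph_def by blast
  obtain N1 where N1: "negligible N1" "\<And>x. x \<notin> N1 \<Longrightarrow> u1 x = d x - of_real (Q x) * u x"
    using AE_negl[OF ae1] by blast
  obtain N2 where N2: "negligible N2" "\<And>x. x \<notin> N2 \<Longrightarrow> z * u x = - d1 x - of_real (Q x) * u1 x - of_real ((Q x)\<^sup>2) * u x"
    using AE_negl[OF ae2] by blast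
  have hu: "(d has_integral (u b - u a)) {a..b}" if "a \<le> b" for a b using W11_hk[OF Wu that] .
  have hu1: "(d1 has_integral (u1 b - u1 a)) {a..b}" if "a \<le> b" for a b using W11_hk[OF Wu1 that] .
  have cu: "continuous_on UNIV u" by (rule cont_from_integral[OF hu])
  have cu1: "continuous_on UNIV u1" by (rule cont_from_integral[OF hu1])
  have Su: "Sol Q z u u1"
    unfolding Sol_def
  proof (intro conjI allI impI cu cu1)
    fix a b :: real assume ab: "a \<le> b"
    show "((\<lambda>x. u1 x + complex_of_real (Q x) * u x) has_integral (u b - u a)) {a..b}"
      by (rule has_integral_spike[OF N1(1) _ hu[OF ab]]) (use N1(2) in simp)
    show "((\<lambda>x. - (complex_of_real (Q x) * u1 x) - (complex_of_real ((Q x)\<^sup>2) + z) * u x) has_integral (u1 b - u1 a)) {a..b}"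
    proof (rule has_integral_spike[OF N2(1) _ hu1[OF ab]])
      fix x assume "x \<in> {a..b} - N2"
      then have "z * u x = - d1 x - of_real (Q x) * u1 x - of_real ((Q x)\<^sup>2) * u x" using N2(2) by blast
      then show "- (complex_of_real (Q x) * u1 x) - (complex_of_real ((Q x)\<^sup>2) + z) * u x = d1 x"
        by algebra
    qed
  qed
  have BLu: "BL u"
  proof -
    have il: "integrable lborel (\<lambda>x. (cmod (u x))\<^sup>2)" using L2u unfolding L2_fun_def by blast
    have iU: "(\<lambda>x. (cmod (u x))\<^sup>2) integrable_on UNIV" by (rule integrable_on_lborel[OF il])
    have "integral {a..b} (\<lambda>x. (cmod (u x))\<^sup>2) \<le> integral UNIV (\<lambda>x. (cmod (u x))\<^sup>2)" for a b
      by (rule integral_subset_le[OF _ _ iU])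
        (auto intro!: integrable_continuous_interval continuous_on_subset[of UNIV] continuous_intros cu)
    then show ?thesis unfolding BL_def using cu by blast
  qed
  define v where "v x = u (x + 1)" for x
  define v1 where "v1 x = u1 (x + 1)" for x
  define w where "w x = v (x + 1)" for x
  define w1 where "w1 x = v1 (x + 1)" for x
  have Sv: "Sol Q z v v1" unfolding v_def v1_def by (rule Sol_shift[OF Su per])
  have Sw: "Sol Q z w w1" unfolding w_def w1_def by (rule Sol_shift[OF Sv per])
  have BLv: "BL v" unfolding v_def by (rule BL_shift[OF BLu])
  have zero: "\<And>U U1. Sol Q z U U1 \<Longrightarrow> U 0 = 0 \<Longrightarrow> U1 0 = 0 \<Longrightarrow> \<forall>x. U x = 0"
    using Sol_unique[OF _ Qint] by blast
  have geo_u: "\<And>r. \<forall>x. v x = r * u x \<Longrightarrow> u x = 0"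
    using geo_zero[OF BLu] unfolding v_def by blast
  show ?thesis
  proof (cases "u 0 = 0 \<and> u1 0 = 0")
    case True
    then show ?thesis using zero[OF Su] by blast
  next
    case nz: False
    show ?thesis
    proof (cases "u 0 * v1 0 - u1 0 * v 0 = 0")
      case True
      obtain r where r: "v 0 = r * u 0" "v1 0 = r * u1 0"
      proof (cases "u 0 = 0")
        case True
        then have "u1 0 \<noteq> 0" using nz by blast
        moreover have "v 0 = 0" using \<open>u 0 * v1 0 - u1 0 * v 0 = 0\<close> True calculation by simp
        ultimately show ?thesis using that[of "v1 0 / u1 0"] True by simp
      next
        case False
        have "v1 0 = v 0 / u 0 * u1 0" using \<open>u 0 * v1 0 - u1 0 * v 0 = 0\<close> False
          by (simp add: field_simps)
        then show ?thesis using that[of "v 0 / u 0"] False by simp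
      qed
      have "\<forall>x. 1 * v x + (- r) * u x = 0"
        by (rule zero[OF Sol_lin[OF Sv Su]]) (use r in simp)+
      then have "\<forall>x. v x = r * u x" by (simp add: algebra_simps)
      then show ?thesis by (rule geo_u)
    next
      case False
      define c where "c = u 0 * v1 0 - u1 0 * v 0"
      define a where "a = v 0 * w1 0 - v1 0 * w 0"
      define b where "b = w 0 * u1 0 - w1 0 * u 0"
      have c0: "c \<noteq> 0" using False unfolding c_def .
      have rel: "\<forall>x. 1 * (a * u x + b * v x) + c * w x = 0"
        by (rule zero[OF Sol_lin[OF Sol_lin[OF Su Sv] Sw]]) (simp_all add: a_def b_def c_def algebra_simps)
      define s where "s = csqrt (b\<^sup>2 - 4 * a * c)"
      define lam where "lam = (- b + s) / (2 * c)"
      define mu where "mu = (- b - s) / (2 * c)"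
      have s2: "s\<^sup>2 = b\<^sup>2 - 4 * a * c" unfolding s_def by (rule power2_csqrt)
      have sum: "lam + mu = - b / c" unfolding lam_def mu_def using c0 by (simp add: field_simps)
      have prod: "lam * mu = a / c"
      proof -
        have "lam * mu = (b\<^sup>2 - s\<^sup>2) / (4 * c\<^sup>2)" unfolding lam_def mu_def
          by (simp add: field_simps power2_eq_square)
        also have "\<dots> = a / c" unfolding s2 using c0 by (simp add: field_simps power2_eq_square)
        finally show ?thesis .
      qed
      define phi where "phi x = v x - mu * u x" for x
      have BLphi: "BL phi" unfolding phi_def by (rule BL_comb[OF BLv BLu])
      have recphi: "\<forall>x. phi (x + 1) = lam * phi x"
      proof
        fix x
        have cw: "c * w x = - (b * v x) - a * u x" using rel[rule_format, of x] by algebra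
        have wx: "w x = - (b / c) * v x - (a / c) * u x"
        proof -
          have "w x = (c * w x) / c" using c0 by simp
          also have "\<dots> = - (b / c) * v x - (a / c) * u x" unfolding cw using c0 by (simp add: field_simps)
          finally show ?thesis .
        qed
        have "phi (x + 1) = w x - mu * v x" unfolding phi_def w_def by (simp add: v_def)
        also have "\<dots> = (lam + mu) * v x - (lam * mu) * u x - mu * v x"
          unfolding wx sum prod by simp
        also have "\<dots> = lam * phi x" unfolding phi_def by (simp add: algebra_simps)
        finally show "phi (x + 1) = lam * phi x" .
      qed
      have "\<forall>x. phi x = 0" using geo_zero[OF BLphi recphi] by blast
      then have "\<forall>x. v x = mu * u x" unfolding phi_def by simp
      then show ?thesis by (rule geo_u)
    qed
  qed
qed

theorem proposition3p9:
  fixes qhat :: "int \<Rightarrow> complex" and Q :: "real \<Rightarrow> real"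
  assumes "Hm1_per_mean_zero qhat"
    and "is_primitive_Q qhat Q"
  shows "point_spectrum_Smax Q = {}"
proof -
  from assms(2) have per: "\<forall>x. Q (x + 1) = Q x" and si: "set_integrable lborel {0..1} (\<lambda>x. (Q x)\<^sup>2)"
    unfolding is_primitive_Q_def by auto
  have i01: "(\<lambda>x. (Q x)\<^sup>2) integrable_on {0..1}" by (rule set_borel_integral_eq_integral(1)[OF si])
  have Qint: "(\<lambda>x. (Q x)\<^sup>2) integrable_on {a..b}" for a b by (rule Q_locint[OF per i01])
  have "AE x in lborel. u x = 0" if "Smax_graph Q u (\<lambda>x. z * u x)" for z u
    using main_zero[OF per Qint that] by simp
  then show ?thesis unfolding point_spectrum_Smax_def by blast
qed

end
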